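(* Let $\lambda>0$ and let $\xi_1,\xi_2,\ldots$ be i.i.d. exponential random variables with parameter $\lambda$. For $n\ge 2$ set $\theta^\star_n=\lambda^{-1}\log n$ and, for $k=1,\ldots,n$, $$D_{n,k}(\theta^\star_n)=\sum_{\ell=1,\ \ell\ne k}^n\mathbf{1}[\xi_k+\xi_\ell>\theta^\star_n].$$ Then for each $d=0,1,2,\ldots$, the sequence of random variables $\left\{\frac1n\sum_{k=1}^n\mathbf{1}[D_{n,k}(\theta^\star_n)=d],\ n=2,3,\ldots\right\}$ does not converge in probability to any constant.
   Context: $D_{n,k}(\theta)$ is the degree of node $k$ in the random threshold graph on nodes $\{1,\ldots,n\}$ in which distinct nodes $k,\ell$ are adjacent iff $\xi_k+\xi_\ell>\theta$, where $\xi_k$ is the fitness of node $k$. An exponential random variable with parameter $\lambda$ has $\mathbb{P}[\xi\le x]=1-e^{-\lambda\max(x,0)}$. *)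

theory Defs
  imports "HOL-Probability.Probability"
begin

definition threshold_degree :: "(nat \<Rightarrow> real) \<Rightarrow> real \<Rightarrow> nat \<Rightarrow> nat \<Rightarrow> nat" where
  "threshold_degree xi theta n k = card {l \<in> {1..n}. l \<noteq> k \<and> xi k + xi l > theta}"

definition conv_in_prob_const :: "'a measure \<Rightarrow> (nat \<Rightarrow> 'a \<Rightarrow> real) \<Rightarrow> real \<Rightarrow> bool" where
  "conv_in_prob_const M X c \<longleftrightarrow>
     (\<forall>e>0. (\<lambda>n. measure M {\<omega> \<in> space M. \<bar>X n \<omega> - c\<bar> > e}) \<longlonglongrightarrow> 0)"

end

theory Submission
  imports Defs
begin

lemma (in prob_space) count_events:
  assumes ind: "indep_vars (\<lambda>_. borel) X I"
  and meas: "\<And>i. i \<in> I \<Longrightarrow> X i \<in> borel_measurable M"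
  and L: "finite L" "L \<subseteq> I" "k \<in> I" "k \<notin> L"
  and E: "E \<in> sets borel" "F \<in> sets borel" "G \<in> sets borel" "E \<inter> F = {}"
  and pE: "\<And>l. l \<in> L \<Longrightarrow> prob (X l -` E \<inter> space M) = p"
  and pF: "\<And>l. l \<in> L \<Longrightarrow> prob (X l -` F \<inter> space M) = q"
  shows "prob {\<omega>\<in>space M. X k \<omega> \<in> G \<and> (\<exists>S\<subseteq>L. card S = m \<and> (\<forall>l\<in>L. X l \<omega> \<in> (if l\<in>S then E else F)))}
     = prob (X k -` G \<inter> space M) * (real (card L choose m) * p^m * q^(card L - m))"
proof -
  define SS where "SS = {S. S \<subseteq> L \<and> card S = m}"
  define A where "A S i = (if i = k then G else if i \<in> S then E else F)" for S i
  define C where "C S = (\<Inter>i\<in>insert k L. X i -` A S i \<inter> space M)" for S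
  have finSS: "finite SS" using L unfolding SS_def by auto
  have eq: "{\<omega>\<in>space M. X k \<omega> \<in> G \<and> (\<exists>S\<subseteq>L. card S = m \<and> (\<forall>l\<in>L. X l \<omega> \<in> (if l\<in>S then E else F)))}
      = (\<Union>S\<in>SS. C S)"
  proof (intro set_eqI iffI)
    fix \<omega> assume "\<omega> \<in> {\<omega>\<in>space M. X k \<omega> \<in> G \<and> (\<exists>S\<subseteq>L. card S = m \<and> (\<forall>l\<in>L. X l \<omega> \<in> (if l\<in>S then E else F)))}"
    then obtain S where "\<omega> \<in> space M" "X k \<omega> \<in> G" "S \<subseteq> L" "card S = m" "\<forall>l\<in>L. X l \<omega> \<in> (if l\<in>S then E else F)"
      by blast
    then show "\<omega> \<in> (\<Union>S\<in>SS. C S)" unfolding SS_def C_def A_def using L(4)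
      by (intro UN_I[of S]) auto
  next
    fix \<omega> assume "\<omega> \<in> (\<Union>S\<in>SS. C S)"
    then obtain S where S: "S \<in> SS" "\<omega> \<in> C S" by blast
    have h: "\<forall>i\<in>insert k L. X i \<omega> \<in> A S i \<and> \<omega> \<in> space M" using S(2) unfolding C_def by blast
    have "\<forall>l\<in>L. X l \<omega> \<in> (if l\<in>S then E else F)"
    proof
      fix l assume "l \<in> L"
      then have "l \<noteq> k" using L(4) by auto
      then show "X l \<omega> \<in> (if l\<in>S then E else F)" using h \<open>l \<in> L\<close> unfolding A_def by auto
    qed
    moreover have "\<omega> \<in> space M" "X k \<omega> \<in> G" using h unfolding A_def by auto
    ultimately show "\<omega> \<in> {\<omega>\<in>space M. X k \<omega> \<in> G \<and> (\<exists>S\<subseteq>L. card S = m \<and> (\<forall>l\<in>L. X l \<omega> \<in> (if l\<in>S then E else F)))}"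
      using S(1) unfolding SS_def by blast
  qed
  have Csets: "C S \<in> sets M" for S
    unfolding C_def using L E meas
    by (intro sets.finite_INT) (auto simp: A_def intro!: measurable_sets[where A=borel])
  have disj: "disjoint_family_on C SS"
    unfolding disjoint_family_on_def
  proof (intro ballI impI)
    fix S S' assume S: "S \<in> SS" "S' \<in> SS" "S \<noteq> S'"
    have "\<exists>l\<in>L. (l \<in> S) \<noteq> (l \<in> S')"
    proof (rule ccontr)
      assume "\<not> ?thesis"
      hence "S = S'" using S unfolding SS_def by auto
      thus False using S by simp
    qed
    then obtain l where l: "l \<in> L" "(l \<in> S) \<noteq> (l \<in> S')" by blast
    have "l \<noteq> k" using l L by auto
    show "C S \<inter> C S' = {}"
    proof (rule ccontr)
      assume "C S \<inter> C S' \<noteq> {}"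
      then obtain \<omega> where "\<omega> \<in> C S" "\<omega> \<in> C S'" by blast
      then have "X l \<omega> \<in> A S l" "X l \<omega> \<in> A S' l" unfolding C_def using l by blast+
      then show False using l \<open>l \<noteq> k\<close> E(4) unfolding A_def by (auto split: if_splits)
    qed
  qed
  have probC: "prob (C S) = prob (X k -` G \<inter> space M) * (p^m * q^(card L - m))" if S: "S \<in> SS" for S
  proof -
    have "prob (C S) = (\<Prod>i\<in>insert k L. prob (X i -` A S i \<inter> space M))"
      unfolding C_def using L E by (intro indep_varsD[OF ind]) (auto simp: A_def)
    also have "\<dots> = prob (X k -` G \<inter> space M) * (\<Prod>i\<in>L. prob (X i -` A S i \<inter> space M))"
      using L by (simp add: A_def)
    also have "(\<Prod>i\<in>L. prob (X i -` A S i \<inter> space M)) = (\<Prod>i\<in>L. if i \<in> S then p else q)"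
      using L pE pF by (intro prod.cong) (auto simp: A_def)
    also have "\<dots> = p ^ card (L \<inter> {i. i \<in> S}) * q ^ card (L \<inter> - {i. i \<in> S})"
      using prod.If_cases[OF L(1), of "\<lambda>i. i \<in> S" "\<lambda>_. p" "\<lambda>_. q"] by simp
    also have "L \<inter> {i. i \<in> S} = S" using S unfolding SS_def by auto
    also have "L \<inter> - {i. i \<in> S} = L - S" by auto
    also have "card (L - S) = card L - m" using S L unfolding SS_def
      using card_Diff_subset[of S L] finite_subset[of S L] by auto
    finally show ?thesis using S unfolding SS_def by simp
  qed
  have "prob (\<Union>S\<in>SS. C S) = (\<Sum>S\<in>SS. prob (C S))"
    using finSS disj Csets by (intro measure_finite_Union) (auto simp: emeasure_eq_measure)
  also have "\<dots> = (\<Sum>S\<in>SS. prob (X k -` G \<inter> space M) * (p^m * q^(card L - m)))"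
    using probC by simp
  also have "\<dots> = prob (X k -` G \<inter> space M) * (real (card L choose m) * p^m * q^(card L - m))"
    using n_subsets[OF L(1), of m] unfolding SS_def by simp
  finally show ?thesis using eq by simp
qed


lemma (in prob_space) expo_gt:
  assumes D: "distributed M lborel X (exponential_density l)" and a: "0 \<le> a" and l: "0 < l"
  shows "prob (X -` {a<..} \<inter> space M) = exp (- a * l)"
proof -
  have "X -` {a<..} \<inter> space M = {x\<in>space M. a < X x}" by auto
  then show ?thesis using exponential_distributedD_gt[OF D a l] by simp
qed

lemma (in prob_space) expo_int:
  assumes D: "distributed M lborel X (exponential_density l)" and b: "0 \<le> b" and l: "0 < l"
  shows "prob (X -` {0<..b} \<inter> space M) = 1 - exp (- b * l)"
proof -
  have Xm: "X \<in> borel_measurable M" using distributed_measurable[OF D] by simp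
  have "X -` {0<..b} \<inter> space M = {x\<in>space M. X x \<le> b} - {x\<in>space M. X x \<le> 0}" by auto
  moreover have "prob ({x\<in>space M. X x \<le> b} - {x\<in>space M. X x \<le> 0})
     = prob {x\<in>space M. X x \<le> b} - prob {x\<in>space M. X x \<le> 0}"
    using Xm b by (intro finite_measure_Diff) auto
  moreover have "prob {x\<in>space M. X x \<le> b} = 1 - exp (- b * l)"
    using exponential_distributedD_le[OF D b l] by simp
  moreover have "prob {x\<in>space M. X x \<le> 0} = 0"
    using exponential_distributedD_le[OF D _ l, of 0] by simp
  ultimately show ?thesis by simp
qed

lemma det_A:
  fixes xi :: "nat \<Rightarrow> real"
  assumes th: "\<theta> \<ge> 0" and S: "S \<subseteq> {1..n}" "card S = d + 2"
    and v: "\<forall>l\<in>{1..n}. xi l \<in> (if l \<in> S then {\<theta><..} else {0<..\<theta>})"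
  shows "card {k\<in>{1..n}. threshold_degree xi \<theta> n k = d} = 0"
proof -
  have "threshold_degree xi \<theta> n k \<ge> d + 1" if k: "k \<in> {1..n}" for k
  proof -
    have "xi k \<in> (if k \<in> S then {\<theta><..} else {0<..\<theta>})" using v k by blast
    then have "xi k \<ge> 0" using th by (cases "k \<in> S") auto
    have sub: "S - {k} \<subseteq> {l \<in> {1..n}. l \<noteq> k \<and> xi k + xi l > \<theta>}"
    proof
      fix l assume l: "l \<in> S - {k}"
      have "l \<in> {1..n}" using l S(1) by auto
      then have "xi l \<in> (if l \<in> S then {\<theta><..} else {0<..\<theta>})" using v by blast
      then have "xi l > \<theta>" using l by simp
      then show "l \<in> {l \<in> {1..n}. l \<noteq> k \<and> xi k + xi l > \<theta>}" using l S(1) \<open>xi k \<ge> 0\<close> by auto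
    qed
    have "finite S" using S(1) finite_subset by blast
    then have "card (S - {k}) \<ge> d + 1" using S(2) by (simp add: card_Diff_singleton_if)
    also have "card (S - {k}) \<le> card {l \<in> {1..n}. l \<noteq> k \<and> xi k + xi l > \<theta>}"
      by (rule card_mono[OF _ sub]) auto
    finally show ?thesis unfolding threshold_degree_def .
  qed
  note * = this
  have "{k\<in>{1..n}. threshold_degree xi \<theta> n k = d} = {}"
  proof (intro equals0I)
    fix k assume "k \<in> {k\<in>{1..n}. threshold_degree xi \<theta> n k = d}"
    then show False using *[of k] by simp
  qed
  then show ?thesis by simp
qed

lemma det_B:
  fixes xi :: "nat \<Rightarrow> real"
  assumes k: "k \<in> {1..n}" and xk: "xi k \<in> {0<..a}" and S: "S \<subseteq> {1..n} - {k}" "card S = d"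
    and v: "\<forall>l\<in>{1..n} - {k}. xi l \<in> (if l \<in> S then {\<theta><..} else {0<..\<theta> - a})"
  shows "threshold_degree xi \<theta> n k = d"
proof -
  have "{l \<in> {1..n}. l \<noteq> k \<and> xi k + xi l > \<theta>} = S"
  proof (intro set_eqI iffI)
    fix l assume l: "l \<in> {l \<in> {1..n}. l \<noteq> k \<and> xi k + xi l > \<theta>}"
    show "l \<in> S"
    proof (rule ccontr)
      assume "l \<notin> S"
      have "l \<in> {1..n} - {k}" using l by auto
      then have "xi l \<in> (if l \<in> S then {\<theta><..} else {0<..\<theta> - a})" using v by blast
      then have "xi l \<le> \<theta> - a" using \<open>l \<notin> S\<close> by auto
      then show False using l xk by auto
    qed
  next
    fix l assume l: "l \<in> S"
    have "l \<in> {1..n} - {k}" using l S(1) by auto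
    then have "xi l \<in> (if l \<in> S then {\<theta><..} else {0<..\<theta> - a})" using v by blast
    then have "xi l > \<theta>" using l by simp
    then show "l \<in> {l \<in> {1..n}. l \<noteq> k \<and> xi k + xi l > \<theta>}" using l S(1) xk by auto
  qed
  then show ?thesis unfolding threshold_degree_def using S(2) by simp
qed

lemma card_sum_if: "finite K \<Longrightarrow> real (card {k\<in>K. P k}) = (\<Sum>k\<in>K. if P k then 1 else 0)"
  by (simp add: sum.inter_filter[symmetric])

lemma deg_meas:
  assumes meas: "\<And>i. i \<in> {1..n} \<Longrightarrow> xi i \<in> borel_measurable M"
  and True: "k \<in> {1..n}"
  shows "{\<omega>\<in>space M. threshold_degree (\<lambda>i. xi i \<omega>) \<theta> n k = d} \<in> sets M"
proof -
  have "(\<lambda>\<omega>. \<Sum>l\<in>{1..n}. if l \<noteq> k \<and> xi k \<omega> + xi l \<omega> > \<theta> then 1 else 0 :: real) \<in> borel_measurable M"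
  proof (intro borel_measurable_sum)
    fix l assume l: "l \<in> {1..n}"
    show "(\<lambda>\<omega>. if l \<noteq> k \<and> xi k \<omega> + xi l \<omega> > \<theta> then 1 else 0 :: real) \<in> borel_measurable M"
    proof (rule measurable_If)
      show "{\<omega>\<in>space M. l \<noteq> k \<and> xi k \<omega> + xi l \<omega> > \<theta>} \<in> sets M"
      proof (cases "l = k")
        case True then show ?thesis by simp
      next
        case False
        have f: "(\<lambda>\<omega>. xi k \<omega> + xi l \<omega>) \<in> borel_measurable M"
          using meas[OF True] meas[OF l] by (rule borel_measurable_add)
        have "{\<omega>\<in>space M. (\<lambda>_. \<theta>) \<omega> < xi k \<omega> + xi l \<omega>} \<in> sets M"
          by (rule borel_measurable_less[OF _ f]) simp
        then show ?thesis using False by simp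
      qed
    qed auto
  qed
  note summ = this
  have eqf: "(\<lambda>\<omega>. real (threshold_degree (\<lambda>i. xi i \<omega>) \<theta> n k))
     = (\<lambda>\<omega>. \<Sum>l\<in>{1..n}. if l \<noteq> k \<and> xi k \<omega> + xi l \<omega> > \<theta> then 1 else 0 :: real)"
  proof
    fix \<omega>
    show "real (threshold_degree (\<lambda>i. xi i \<omega>) \<theta> n k)
     = (\<Sum>l\<in>{1..n}. if l \<noteq> k \<and> xi k \<omega> + xi l \<omega> > \<theta> then 1 else 0 :: real)"
      unfolding threshold_degree_def by (rule card_sum_if) simp
  qed
  have "(\<lambda>\<omega>. real (threshold_degree (\<lambda>i. xi i \<omega>) \<theta> n k)) \<in> borel_measurable M"
    unfolding eqf by (rule summ)
  then have "(\<lambda>\<omega>. real (threshold_degree (\<lambda>i. xi i \<omega>) \<theta> n k)) -` {real d} \<inter> space M \<in> sets M"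
    by (rule measurable_sets) simp
  moreover have "(\<lambda>\<omega>. real (threshold_degree (\<lambda>i. xi i \<omega>) \<theta> n k)) -` {real d} \<inter> space M
     = {\<omega>\<in>space M. threshold_degree (\<lambda>i. xi i \<omega>) \<theta> n k = d}" by auto
  ultimately show ?thesis by simp
qed


theorem proposition7:
  fixes M :: "'a measure" and xi :: "nat \<Rightarrow> 'a \<Rightarrow> real" and lam :: real and d :: nat
  assumes "prob_space M"
    and "lam > 0"
    and "prob_space.indep_vars M (\<lambda>_. borel) xi {1..}"
    and "\<And>i. i \<ge> 1 \<Longrightarrow> distributed M lborel (xi i) (exponential_density lam)"
  shows "\<not> (\<exists>c. conv_in_prob_const M
             (\<lambda>n \<omega>. (1 / real n) * real (card {k \<in> {1..n}.
                 threshold_degree (\<lambda>i. xi i \<omega>) (ln (real n) / lam) n k = d})) c)"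
proof
  interpret prob_space M by fact
  have lam: "lam > 0" by fact
  have ind: "indep_vars (\<lambda>_. borel) xi {1..}" by fact
  have D: "\<And>i. i \<ge> 1 \<Longrightarrow> distributed M lborel (xi i) (exponential_density lam)" by fact
  have meas: "\<And>i. i \<in> {1..} \<Longrightarrow> xi i \<in> borel_measurable M"
    using distributed_measurable[OF D] by simp
  define \<theta> where "\<theta> n = ln (real n) / lam" for n :: nat
  define X where "X n \<omega> = (1 / real n) * real (card {k \<in> {1..n}.
                 threshold_degree (\<lambda>i. xi i \<omega>) (\<theta> n) n k = d})" for n \<omega>
  define A where "A n k = {\<omega>\<in>space M. threshold_degree (\<lambda>i. xi i \<omega>) (\<theta> n) n k = d}" for n k
  assume "\<exists>c. conv_in_prob_const M
             (\<lambda>n \<omega>. (1 / real n) * real (card {k \<in> {1..n}.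
                 threshold_degree (\<lambda>i. xi i \<omega>) (ln (real n) / lam) n k = d})) c"
  then obtain c where "conv_in_prob_const M X c" unfolding X_def \<theta>_def by blast
  then have conv: "\<And>e. e > 0 \<Longrightarrow> (\<lambda>n. measure M {\<omega> \<in> space M. \<bar>X n \<omega> - c\<bar> > e}) \<longlonglongrightarrow> 0"
    unfolding conv_in_prob_const_def by blast
  have Asets: "A n k \<in> sets M" if "k \<in> {1..n}" for n k
    unfolding A_def using that meas by (intro deg_meas) auto
  have Xsum: "X n \<omega> = (1 / real n) * (\<Sum>k\<in>{1..n}. indicator (A n k) \<omega>)" if "\<omega> \<in> space M" for n \<omega>
  proof -
    have "real (card {k \<in> {1..n}. threshold_degree (\<lambda>i. xi i \<omega>) (\<theta> n) n k = d})
      = (\<Sum>k\<in>{1..n}. if threshold_degree (\<lambda>i. xi i \<omega>) (\<theta> n) n k = d then 1 else 0)"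
      by (rule card_sum_if) simp
    also have "\<dots> = (\<Sum>k\<in>{1..n}. indicator (A n k) \<omega>)"
      unfolding A_def using that by (intro sum.cong) (auto simp: indicator_def)
    finally show ?thesis unfolding X_def by simp
  qed
  have Xmeas: "X n \<in> borel_measurable M" for n
  proof -
    have "(\<lambda>\<omega>. (1 / real n) * (\<Sum>k\<in>{1..n}. indicator (A n k) \<omega> :: real)) \<in> borel_measurable M"
      using Asets by (intro borel_measurable_times borel_measurable_const borel_measurable_sum borel_measurable_indicator) auto
    then show ?thesis using Xsum by (subst measurable_cong) auto
  qed
  have Xbd: "0 \<le> X n \<omega> \<and> X n \<omega> \<le> 1" for n \<omega>
  proof -
    have "card {k \<in> {1..n}. threshold_degree (\<lambda>i. xi i \<omega>) (\<theta> n) n k = d} \<le> card {1..n}"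
      by (rule card_mono) auto
    then have "real (card {k \<in> {1..n}. threshold_degree (\<lambda>i. xi i \<omega>) (\<theta> n) n k = d}) \<le> real n" by simp
    then show ?thesis unfolding X_def by (cases "n = 0") (auto simp: field_simps)
  qed
  have thpos: "\<theta> n \<ge> 0" if "n \<ge> 1" for n
    unfolding \<theta>_def using that lam by (intro divide_nonneg_pos) auto
  have expth: "exp (- \<theta> n * lam) = 1 / real n" if "n \<ge> 1" for n
  proof -
    have "- \<theta> n * lam = - ln (real n)" unfolding \<theta>_def using lam by simp
    also have "exp (- ln (real n)) = 1 / real n" using that by (simp add: exp_minus inverse_eq_divide)
    finally show ?thesis by simp
  qed
  have pgt: "prob (xi l -` {\<theta> n<..} \<inter> space M) = 1 / real n" if "l \<ge> 1" "n \<ge> 1" for l n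
  proof -
    have "prob (xi l -` {\<theta> n<..} \<inter> space M) = exp (- \<theta> n * lam)"
      by (rule expo_gt[OF D[OF that(1)] thpos[OF that(2)] lam])
    also have "- \<theta> n * lam = - ln (real n)" unfolding \<theta>_def using lam by simp
    also have "exp (- ln (real n)) = 1 / real n" using that by (simp add: exp_minus inverse_eq_divide)
    finally show ?thesis .
  qed
  have pint: "prob (xi l -` {0<..b} \<inter> space M) = 1 - exp (- b * lam)" if "l \<ge> 1" "b \<ge> 0" for l b
    by (rule expo_int[OF D[OF that(1)] that(2) lam])
  have setm: "{\<omega> \<in> space M. \<bar>X n \<omega> - c\<bar> > e} \<in> sets M" for n e
    using Xmeas[of n] by measurable
  define m where "m = d + 2"
  define PA where "PA n = real (n choose m) * (1/real n)^m * (1 - 1/real n)^(n - m)" for n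
  define EA where "EA n = {\<omega>\<in>space M. xi (n+1) \<omega> \<in> UNIV \<and> (\<exists>S\<subseteq>{1..n}. card S = m \<and>
      (\<forall>l\<in>{1..n}. xi l \<omega> \<in> (if l\<in>S then {\<theta> n<..} else {0<..\<theta> n})))}" for n
  have PAeq: "prob (EA n) = PA n" if n: "n \<ge> 2" for n
  proof -
    have "prob (EA n) = prob (xi (n+1) -` UNIV \<inter> space M) *
        (real (card {1..n} choose m) * (1/real n)^m * (1 - 1/real n)^(card {1..n} - m))"
      unfolding EA_def
    proof (rule count_events[OF ind])
      show "\<And>l. l \<in> {1..n} \<Longrightarrow> prob (xi l -` {\<theta> n<..} \<inter> space M) = 1 / real n"
        using pgt n by auto
      show "\<And>l. l \<in> {1..n} \<Longrightarrow> prob (xi l -` {0<..\<theta> n} \<inter> space M) = 1 - 1 / real n"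
      proof -
        fix l assume l: "l \<in> {1..n}"
        have "prob (xi l -` {0<..\<theta> n} \<inter> space M) = 1 - exp (- \<theta> n * lam)"
          using l n by (intro pint thpos) auto
        also have "exp (- \<theta> n * lam) = 1 / real n" using n by (intro expth) auto
        finally show "prob (xi l -` {0<..\<theta> n} \<inter> space M) = 1 - 1 / real n" .
      qed
    qed (use meas in auto)
    then show ?thesis unfolding PA_def by (simp add: prob_space)
  qed
  have EAsub: "EA n \<subseteq> {\<omega> \<in> space M. \<bar>X n \<omega> - c\<bar> > \<bar>c\<bar>/2}" if n: "n \<ge> 2" "c \<noteq> 0" for n
  proof
    fix \<omega> assume w: "\<omega> \<in> EA n"
    then obtain S where S: "S \<subseteq> {1..n}" "card S = d + 2"
       "\<forall>l\<in>{1..n}. xi l \<omega> \<in> (if l\<in>S then {\<theta> n<..} else {0<..\<theta> n})"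
      unfolding EA_def m_def by blast
    have th0: "\<theta> n \<ge> 0" using n by (intro thpos) auto
    have "X n \<omega> = 0" unfolding X_def using det_A[OF th0 S] by simp
    then show "\<omega> \<in> {\<omega> \<in> space M. \<bar>X n \<omega> - c\<bar> > \<bar>c\<bar>/2}" using w n unfolding EA_def by auto
  qed
  define \<delta>A where "\<delta>A = (1/real m)^m * (exp (-1) / 2)"
  have \<delta>Apos: "\<delta>A > 0" unfolding \<delta>A_def m_def by simp
  have "(\<lambda>n. (1 + (-1) / real n)^n) \<longlonglongrightarrow> exp (-1)" by (rule tendsto_exp_limit_sequentially)
  then have ev1: "eventually (\<lambda>n. (1 + (-1) / real n)^n > exp (-1) / 2) sequentially"
    by (rule order_tendstoD) simp
  have evA: "eventually (\<lambda>n. PA n \<ge> \<delta>A) sequentially"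
    using ev1 eventually_ge_at_top[of "m"] eventually_ge_at_top[of "2::nat"]
  proof eventually_elim
    case (elim n)
    have n0: "real n > 0" using elim by simp
    have "(real n / real m)^m \<le> real (n choose m)"
      using binomial_ge_n_over_k_pow_k[of m n] elim by simp
    then have "(real n / real m)^m * (1/real n)^m \<le> real (n choose m) * (1/real n)^m"
      by (intro mult_right_mono) auto
    moreover have "(real n / real m)^m * (1/real n)^m = (1/real m)^m"
      using n0 by (simp add: power_mult_distrib[symmetric])
    ultimately have b1: "(1/real m)^m \<le> real (n choose m) * (1/real n)^m" by simp
    have "(1 - 1/real n)^n \<le> (1 - 1/real n)^(n-m)"
      using n0 elim by (intro power_decreasing) (auto simp: field_simps)
    moreover have "(1 + (-1) / real n)^n = (1 - 1/real n)^n" by simp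
    ultimately have b2: "exp (-1) / 2 \<le> (1 - 1/real n)^(n-m)" using elim by linarith
    have "\<delta>A \<le> (real (n choose m) * (1/real n)^m) * (1 - 1/real n)^(n-m)"
      unfolding \<delta>A_def using b1 b2 by (intro mult_mono) auto
    then show ?case unfolding PA_def by simp
  qed
  have c0: "c = 0"
  proof (rule ccontr)
    assume c: "c \<noteq> 0"
    then have "\<bar>c\<bar>/2 > 0" by simp
    from conv[OF this] have "eventually (\<lambda>n. measure M {\<omega> \<in> space M. \<bar>X n \<omega> - c\<bar> > \<bar>c\<bar>/2} < \<delta>A) sequentially"
      by (rule order_tendstoD) (rule \<delta>Apos)
    then have "eventually (\<lambda>n. False) sequentially"
      using evA eventually_ge_at_top[of "2::nat"]
    proof eventually_elim
      case (elim n)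
      have "prob (EA n) \<le> measure M {\<omega> \<in> space M. \<bar>X n \<omega> - c\<bar> > \<bar>c\<bar>/2}"
        by (rule finite_measure_mono[OF EAsub[OF elim(3) c] setm])
      then show False using PAeq[OF elim(3)] elim by linarith
    qed
    then show False by simp
  qed
  define a where "a = 1 / lam"
  define PB where "PB n = (1 - exp (-1)) * (real ((n-1) choose d) * (1/real n)^d * (1 - exp 1 / real n)^(n - 1 - d))" for n
  define EB where "EB n k = {\<omega>\<in>space M. xi k \<omega> \<in> {0<..a} \<and> (\<exists>S\<subseteq>{1..n}-{k}. card S = d \<and>
      (\<forall>l\<in>{1..n}-{k}. xi l \<omega> \<in> (if l\<in>S then {\<theta> n<..} else {0<..\<theta> n - a})))}" for n k
  have apos: "a > 0" unfolding a_def using lam by simp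
  have tha: "\<theta> n - a \<ge> 0" if "n \<ge> 3" for n
  proof -
    have "exp 1 \<le> real n" using exp_le that by linarith
    then have "ln (exp 1) \<le> ln (real n)" using that by (subst ln_le_cancel_iff) auto
    then have "ln (real n) \<ge> 1" by simp
    then show ?thesis unfolding \<theta>_def a_def using lam by (simp add: field_simps)
  qed
  have expth2: "exp (- (\<theta> n - a) * lam) = exp 1 / real n" if "n \<ge> 1" for n
  proof -
    have "- (\<theta> n - a) * lam = 1 - ln (real n)" unfolding \<theta>_def a_def using lam by (simp add: field_simps)
    also have "exp (1 - ln (real n)) = exp 1 / real n" using that by (simp add: exp_diff)
    finally show ?thesis by simp
  qed
  have PBeq: "prob (EB n k) = PB n" if n: "n \<ge> 3" and k: "k \<in> {1..n}" for n k
  proof -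
    have "prob (EB n k) = prob (xi k -` {0<..a} \<inter> space M) *
        (real (card ({1..n}-{k}) choose d) * (1/real n)^d * (1 - exp 1 / real n)^(card ({1..n}-{k}) - d))"
      unfolding EB_def
    proof (rule count_events[OF ind])
      show "\<And>l. l \<in> {1..n}-{k} \<Longrightarrow> prob (xi l -` {\<theta> n<..} \<inter> space M) = 1 / real n"
        using pgt n by auto
      show "\<And>l. l \<in> {1..n}-{k} \<Longrightarrow> prob (xi l -` {0<..\<theta> n - a} \<inter> space M) = 1 - exp 1 / real n"
      proof -
        fix l assume l: "l \<in> {1..n}-{k}"
        have "prob (xi l -` {0<..\<theta> n - a} \<inter> space M) = 1 - exp (- (\<theta> n - a) * lam)"
          using l n by (intro pint tha) auto
        also have "exp (- (\<theta> n - a) * lam) = exp 1 / real n" using n by (intro expth2) auto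
        finally show "prob (xi l -` {0<..\<theta> n - a} \<inter> space M) = 1 - exp 1 / real n" .
      qed
    qed (use meas k apos in auto)
    moreover have "prob (xi k -` {0<..a} \<inter> space M) = 1 - exp (-1)"
      using pint[of k a] k lam unfolding a_def by auto
    moreover have "card ({1..n}-{k}) = n - 1" using k by simp
    ultimately show ?thesis unfolding PB_def by simp
  qed
  have EBsub: "EB n k \<subseteq> A n k" if k: "k \<in> {1..n}" for n k
  proof
    fix \<omega> assume w: "\<omega> \<in> EB n k"
    then obtain S where S: "xi k \<omega> \<in> {0<..a}" "S \<subseteq> {1..n}-{k}" "card S = d"
       "\<forall>l\<in>{1..n}-{k}. xi l \<omega> \<in> (if l\<in>S then {\<theta> n<..} else {0<..\<theta> n - a})"
      unfolding EB_def by blast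
    have "threshold_degree (\<lambda>i. xi i \<omega>) (\<theta> n) n k = d"
      by (rule det_B[OF k S])
    then show "\<omega> \<in> A n k" using w unfolding A_def EB_def by auto
  qed
  have intX: "integral\<^sup>L M (X n) \<ge> PB n" if n: "n \<ge> 3" for n
  proof -
    have "integral\<^sup>L M (X n) = integral\<^sup>L M (\<lambda>\<omega>. (1 / real n) * (\<Sum>k\<in>{1..n}. indicator (A n k) \<omega>))"
      using Xsum by (intro Bochner_Integration.integral_cong) auto
    also have "\<dots> = (1 / real n) * (\<Sum>k\<in>{1..n}. integral\<^sup>L M (indicator (A n k)))"
    proof -
      have "integral\<^sup>L M (\<lambda>\<omega>. \<Sum>k\<in>{1..n}. indicator (A n k) \<omega> :: real) = (\<Sum>k\<in>{1..n}. integral\<^sup>L M (indicator (A n k)))"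
      proof (rule Bochner_Integration.integral_sum)
        fix k assume "k \<in> {1..n}"
        then show "integrable M (indicator (A n k) :: 'a \<Rightarrow> real)"
          using Asets by (intro integrable_real_indicator) (auto simp: emeasure_eq_measure)
      qed
      then show ?thesis by simp
    qed
    also have "\<dots> = (1 / real n) * (\<Sum>k\<in>{1..n}. prob (A n k))"
      using Asets sets.sets_into_space by (intro arg_cong2[where f="(*)"] sum.cong refl) (simp add: Int_absorb2)
    also have "\<dots> \<ge> (1 / real n) * (\<Sum>k\<in>{1..n}. PB n)"
    proof (intro mult_left_mono sum_mono)
      fix k assume k: "k \<in> {1..n}"
      have "prob (EB n k) \<le> prob (A n k)" by (rule finite_measure_mono[OF EBsub[OF k] Asets[OF k]])
      then show "PB n \<le> prob (A n k)" using PBeq[OF n k] by simp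
    qed simp
    also have "(1 / real n) * (\<Sum>k\<in>{1..n}. PB n) = PB n" using n by simp
    finally show ?thesis .
  qed
  have intle: "integral\<^sup>L M (X n) \<le> e + measure M {\<omega> \<in> space M. \<bar>X n \<omega> - c\<bar> > e}" if e: "e \<ge> 0" for n e
  proof -
    let ?T = "{\<omega> \<in> space M. \<bar>X n \<omega> - c\<bar> > e}"
    have iX: "integrable M (X n)"
      by (rule integrable_const_bound[where B=1]) (use Xbd Xmeas in auto)
    have iT: "integrable M (\<lambda>\<omega>. e + indicator ?T \<omega>)"
      using setm by (intro Bochner_Integration.integrable_add integrable_real_indicator) (auto simp: emeasure_eq_measure)
    have "integral\<^sup>L M (X n) \<le> integral\<^sup>L M (\<lambda>\<omega>. e + indicator ?T \<omega>)"
    proof (rule integral_mono[OF iX iT])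
      fix \<omega> assume w: "\<omega> \<in> space M"
      show "X n \<omega> \<le> e + indicator ?T \<omega>"
        using Xbd[of n \<omega>] w c0 e by (auto simp: indicator_def)
    qed
    also have "\<dots> = e + measure M ?T"
      using setm by (subst Bochner_Integration.integral_add) (auto simp: emeasure_eq_measure prob_space Int_absorb2)
    finally show ?thesis .
  qed
  define \<delta>B where "\<delta>B = (1 - exp (-1)) * ((1/(2*real d))^d * (exp (- exp 1) / 2))"
  have \<delta>Bpos: "\<delta>B > 0" unfolding \<delta>B_def by (cases "d = 0") auto
  have "(\<lambda>n. (1 + (- exp 1) / real n)^n) \<longlonglongrightarrow> exp (- exp 1)" by (rule tendsto_exp_limit_sequentially)
  then have ev2: "eventually (\<lambda>n. (1 + (- exp 1) / real n)^n > exp (- exp 1) / 2) sequentially"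
    by (rule order_tendstoD) simp
  have evB: "eventually (\<lambda>n. PB n \<ge> \<delta>B) sequentially"
    using ev2 eventually_ge_at_top[of "d + 1"] eventually_ge_at_top[of "3::nat"]
  proof eventually_elim
    case (elim n)
    have n0: "real n > 0" using elim by simp
    have dn: "d \<le> n - 1" using elim by simp
    have "(real (n-1) / real d)^d \<le> real ((n-1) choose d)"
      by (rule binomial_ge_n_over_k_pow_k[OF dn])
    then have "(real (n-1) / real d)^d * (1/real n)^d \<le> real ((n-1) choose d) * (1/real n)^d"
      by (intro mult_right_mono) auto
    moreover have "(real (n-1) / real d)^d * (1/real n)^d = (real (n-1) / real d * (1/real n))^d"
      by (rule power_mult_distrib[symmetric])
    moreover have "(1/(2*real d))^d \<le> (real (n-1) / real d * (1/real n))^d"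
    proof (rule power_mono)
      show "0 \<le> 1/(2*real d)" by simp
      show "1/(2*real d) \<le> real (n-1) / real d * (1/real n)"
      proof (cases "d = 0")
        case False
        have "real (n-1) = real n - 1" using elim by (simp add: of_nat_diff)
        then show ?thesis using False n0 elim by (simp add: field_simps)
      qed simp
    qed
    ultimately have b1: "(1/(2*real d))^d \<le> real ((n-1) choose d) * (1/real n)^d" by linarith
    have "exp 1 \<le> real n" using exp_le elim by linarith
    then have "(1 - exp 1/real n)^n \<le> (1 - exp 1/real n)^(n-1-d)"
      using n0 elim by (intro power_decreasing) (auto simp: field_simps)
    moreover have "(1 + (- exp 1) / real n)^n = (1 - exp 1/real n)^n" by simp
    ultimately have b2: "exp (- exp 1) / 2 \<le> (1 - exp 1/real n)^(n-1-d)" using elim by linarith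
    have "(1/(2*real d))^d * (exp (- exp 1) / 2) \<le> (real ((n-1) choose d) * (1/real n)^d) * (1 - exp 1/real n)^(n-1-d)"
      using b1 b2 by (intro mult_mono) auto
    then have "\<delta>B \<le> (1 - exp (-1)) * ((real ((n-1) choose d) * (1/real n)^d) * (1 - exp 1/real n)^(n-1-d))"
      unfolding \<delta>B_def by (intro mult_left_mono) auto
    then show ?case unfolding PB_def by (simp add: mult.assoc)
  qed
  have "\<delta>B / 2 > 0" using \<delta>Bpos by simp
  from conv[OF this] have "eventually (\<lambda>n. measure M {\<omega> \<in> space M. \<bar>X n \<omega> - c\<bar> > \<delta>B / 2} < \<delta>B / 2) sequentially"
    by (rule order_tendstoD) (rule \<open>\<delta>B / 2 > 0\<close>)
  then have "eventually (\<lambda>n. False) sequentially"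
    using evB eventually_ge_at_top[of "3::nat"]
  proof eventually_elim
    case (elim n)
    have "PB n \<le> \<delta>B / 2 + measure M {\<omega> \<in> space M. \<bar>X n \<omega> - c\<bar> > \<delta>B / 2}"
      using intX[OF elim(3)] intle[of "\<delta>B / 2" n] \<delta>Bpos by linarith
    then show False using elim by linarith
  qed
  then show False by simp
qed

end
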